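(* Let $X$ be a random vector with values in $\mathcal{X}\subset\mathbb{R}^d$ whose distribution has a density $f$ with respect to Lebesgue measure $Leb$. Assume that $f$ is bounded ($\|f\|_\infty<\infty$) and that $\mathbb{P}\{f(X)=c\}=0$ for all $c\ge 0$. Define, for $t>0$, $$\textsc{EM}^*(t)=\max_{\Omega\ \text{Borel}}\big\{\mathbb{P}(X\in\Omega)-t\,Leb(\Omega)\big\},\qquad \lambda(t)=Leb(\{x\in\mathcal{X}: f(x)\ge t\}).$$ Then $\textsc{EM}^*$ is differentiable on $(0,\infty)$ with $\textsc{EM}^{*\prime}(t)=-\lambda(t)$ for all $t>0$. Moreover, since $t\mapsto\lambda(t)$ is decreasing, $\textsc{EM}^*$ is convex.
   Context: $Leb$ denotes Lebesgue measure on $\mathbb{R}^d$. *)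

theory Defs
  imports "HOL-Probability.Probability"
begin

text \<open>Sets of infinite Lebesgue measure give value minus infinity and are irrelevant
  (the empty set gives 0), so the supremum is taken over Borel sets of finite
  Lebesgue measure.\<close>
definition EM_star :: "'a measure \<Rightarrow> ('a \<Rightarrow> 'd::euclidean_space) \<Rightarrow> real \<Rightarrow> real" where
  "EM_star M X t =
     (SUP \<Omega> \<in> {\<Omega> \<in> sets borel. emeasure lborel \<Omega> < \<infinity>}.
        measure M (X -` \<Omega> \<inter> space M) - t * measure lborel \<Omega>)"

definition level_volume :: "'d::euclidean_space set \<Rightarrow> ('d \<Rightarrow> real) \<Rightarrow> real \<Rightarrow> real" where
  "level_volume S f t = measure lborel {x \<in> S. f x \<ge> t}"

end

theory Submission
  imports Defs
begin

theorem proposition1: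
  fixes M :: "'a measure" and X :: "'a \<Rightarrow> 'd::euclidean_space"
    and f :: "'d \<Rightarrow> real" and S :: "'d set"
  assumes "prob_space M"
    and "S \<in> sets borel"
    and "\<forall>\<omega>\<in>space M. X \<omega> \<in> S"
    and "\<forall>x. f x \<ge> 0"
    and "distributed M lborel X (\<lambda>x. ennreal (f x))"
    and "\<exists>B. AE x in lborel. f x \<le> B"
    and "\<forall>c\<ge>0. measure M {\<omega> \<in> space M. f (X \<omega>) = c} = 0"
  shows "(\<forall>t>0. (EM_star M X has_real_derivative (- level_volume S f t)) (at t))
         \<and> convex_on {0<..} (EM_star M X)"
proof -
  interpret P: prob_space M by (rule assms(1))
  note D = assms(5)
  have fm[measurable]: "f \<in> borel_measurable borel"
    using distributed_real_measurable[OF _ D] assms(4) by simp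
  have Xm[measurable]: "X \<in> measurable M borel"
    using distributed_measurable[OF D] by simp
  note Sm[measurable] = assms(2)
  define mu where "mu B = measure M (X -` B \<inter> space M)" for B
  define L where "L B = measure lborel B" for B :: "'d set"
  define A where "A s = {x\<in>S. s \<le> f x}" for s
  have A_sets[measurable]: "A s \<in> sets borel" for s
    unfolding A_def by measurable
  have lower: "ennreal s * emeasure lborel B \<le> emeasure M (X -` B \<inter> space M)"
    if "B \<in> sets borel" "B \<subseteq> {x. s \<le> f x}" "0 \<le> s" for B s
  proof -
    have "ennreal s * emeasure lborel B = (\<integral>\<^sup>+x. ennreal s * indicator B x \<partial>lborel)"
      using that by (simp add: nn_integral_cmult_indicator)
    also have "\<dots> \<le> (\<integral>\<^sup>+x. ennreal (f x) * indicator B x \<partial>lborel)"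
      using that by (intro nn_integral_mono) (auto simp: indicator_def intro: ennreal_leI)
    also have "\<dots> = emeasure M (X -` B \<inter> space M)"
      using distributed_emeasure[OF D, of B] that by simp
    finally show ?thesis .
  qed
  have upper: "emeasure M (X -` B \<inter> space M) \<le> ennreal s * emeasure lborel B"
    if "B \<in> sets borel" "B \<subseteq> {x. f x \<le> s}" for B s
  proof -
    have "emeasure M (X -` B \<inter> space M) = (\<integral>\<^sup>+x. ennreal (f x) * indicator B x \<partial>lborel)"
      using distributed_emeasure[OF D, of B] that by simp
    also have "\<dots> \<le> (\<integral>\<^sup>+x. ennreal s * indicator B x \<partial>lborel)"
      using that by (intro nn_integral_mono) (auto simp: indicator_def intro: ennreal_leI)
    also have "\<dots> = ennreal s * emeasure lborel B"
      using that by (simp add: nn_integral_cmult_indicator)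
    finally show ?thesis .
  qed
  have finB: "emeasure lborel B < \<infinity>"
    if "B \<in> sets borel" "B \<subseteq> {x. s \<le> f x}" "0 < s" for B s
  proof (rule ccontr)
    assume "\<not> emeasure lborel B < \<infinity>"
    then have inf: "emeasure lborel B = \<infinity>" by (simp add: less_top[symmetric])
    have "ennreal s * emeasure lborel B \<le> 1"
      using lower[OF that(1,2)] that(3) P.emeasure_le_1[of "X -` B \<inter> space M"]
      by (meson dual_order.trans less_imp_le)
    then show False using inf that(3) by (simp add: ennreal_mult_top top_unique)
  qed
  have muS: "mu B = mu (B \<inter> S)" for B
  proof -
    have "X -` B \<inter> space M = X -` (B \<inter> S) \<inter> space M" using assms(3) by auto
    then show ?thesis unfolding mu_def by simp
  qed
  have mu_nn: "0 \<le> mu B" for B unfolding mu_def by simp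
  have L_nn: "0 \<le> L B" for B unfolding L_def by simp
  have lowerR: "s * L B \<le> mu B"
    if "B \<in> sets borel" "B \<subseteq> {x. s \<le> f x}" "0 \<le> s" "emeasure lborel B < \<infinity>" for B s
  proof -
    have "ennreal (s * L B) \<le> ennreal (mu B)"
      using lower[OF that(1-3)] that(3,4) unfolding mu_def L_def
      by (simp add: ennreal_mult P.emeasure_eq_measure emeasure_eq_ennreal_measure[of lborel B])
    then show ?thesis using mu_nn by (simp add: ennreal_le_iff)
  qed
  have upperR: "mu B \<le> s * L B"
    if "B \<in> sets borel" "B \<subseteq> {x. f x \<le> s}" "0 \<le> s" "emeasure lborel B < \<infinity>" for B s
  proof -
    have "ennreal (mu B) \<le> ennreal (s * L B)"
      using upper[OF that(1-2)] that(3,4) unfolding mu_def L_def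
      by (simp add: ennreal_mult P.emeasure_eq_measure emeasure_eq_ennreal_measure[of lborel B])
    then show ?thesis using that(3) L_nn by (simp add: ennreal_le_iff)
  qed
  have mu_add: "mu (B \<union> C) = mu B + mu C"
    if "B \<in> sets borel" "C \<in> sets borel" "B \<inter> C = {}" for B C
  proof -
    have "X -` (B \<union> C) \<inter> space M = (X -` B \<inter> space M) \<union> (X -` C \<inter> space M)" by auto
    moreover have "X -` B \<inter> space M \<in> sets M" "X -` C \<inter> space M \<in> sets M"
      using that by measurable
    moreover have "(X -` B \<inter> space M) \<inter> (X -` C \<inter> space M) = {}" using that by auto
    ultimately show ?thesis unfolding mu_def by (simp add: P.finite_measure_Union)
  qed
  have L_add: "L (B \<union> C) = L B + L C"
    if "B \<in> sets borel" "C \<in> sets borel" "B \<inter> C = {}"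
       "emeasure lborel B < \<infinity>" "emeasure lborel C < \<infinity>" for B C
    unfolding L_def using that by (intro measure_Union) auto
  have L_mono: "L B \<le> L C"
    if "B \<subseteq> C" "B \<in> sets borel" "C \<in> sets borel" "emeasure lborel C < \<infinity>" for B C
    unfolding L_def using that by (intro measure_mono_fmeasurable) (auto simp: fmeasurable_def)
  have finA: "emeasure lborel (A s) < \<infinity>" if "0 < s" for s
    using finB[of "A s" s] that by (auto simp: A_def)
  have opt: "mu \<Omega> - s * L \<Omega> \<le> mu (A s) - s * L (A s)"
    if s: "0 < s" and O: "\<Omega> \<in> sets borel" "emeasure lborel \<Omega> < \<infinity>" for \<Omega> s
  proof -
    let ?A = "A s"
    have fA: "emeasure lborel ?A < \<infinity>" using finA s .
    have f1: "emeasure lborel (\<Omega> \<inter> ?A) < \<infinity>" "emeasure lborel (\<Omega> - ?A) < \<infinity>"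
      "emeasure lborel (?A - \<Omega>) < \<infinity>" "emeasure lborel ((\<Omega> - ?A) \<inter> S) < \<infinity>"
      using O fA by (auto intro: le_less_trans[OF emeasure_mono])
    have m: "\<Omega> \<inter> ?A \<in> sets borel" "\<Omega> - ?A \<in> sets borel" "?A - \<Omega> \<in> sets borel"
      using O by auto
    have u1: "\<Omega> \<inter> ?A \<union> (\<Omega> - ?A) = \<Omega>" "\<Omega> \<inter> ?A \<union> (?A - \<Omega>) = ?A" by blast+
    have d1: "(\<Omega> \<inter> ?A) \<inter> (\<Omega> - ?A) = {}" "(\<Omega> \<inter> ?A) \<inter> (?A - \<Omega>) = {}" by blast+
    have e1: "mu \<Omega> = mu (\<Omega> \<inter> ?A) + mu (\<Omega> - ?A)"
      using mu_add[OF m(1) m(2) d1(1)] unfolding u1 .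
    have e2: "mu ?A = mu (\<Omega> \<inter> ?A) + mu (?A - \<Omega>)"
      using mu_add[OF m(1) m(3) d1(2)] unfolding u1 .
    have e3: "L \<Omega> = L (\<Omega> \<inter> ?A) + L (\<Omega> - ?A)"
      using L_add[OF m(1) m(2) d1(1) f1(1) f1(2)] unfolding u1 .
    have e4: "L ?A = L (\<Omega> \<inter> ?A) + L (?A - \<Omega>)"
      using L_add[OF m(1) m(3) d1(2) f1(1) f1(3)] unfolding u1 .
    have i1: "mu (\<Omega> - ?A) \<le> s * L (\<Omega> - ?A)"
    proof -
      have "mu (\<Omega> - ?A) = mu ((\<Omega> - ?A) \<inter> S)" by (rule muS)
      also have "\<dots> \<le> s * L ((\<Omega> - ?A) \<inter> S)"
        using O f1 s by (intro upperR) (auto simp: A_def)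
      also have "\<dots> \<le> s * L (\<Omega> - ?A)"
        using O f1 s by (intro mult_left_mono L_mono) auto
      finally show ?thesis .
    qed
    have i2: "s * L (?A - \<Omega>) \<le> mu (?A - \<Omega>)"
      using O f1 s by (intro lowerR) (auto simp: A_def)
    have "s * L \<Omega> = s * L (\<Omega> \<inter> ?A) + s * L (\<Omega> - ?A)" using e3 by (simp add: distrib_left)
    moreover have "s * L ?A = s * L (\<Omega> \<inter> ?A) + s * L (?A - \<Omega>)" using e4 by (simp add: distrib_left)
    ultimately show ?thesis using e1 e2 i1 i2 by linarith
  qed
  have bdd: "bdd_above ((\<lambda>\<Omega>. mu \<Omega> - s * L \<Omega>) ` {\<Omega> \<in> sets borel. emeasure lborel \<Omega> < \<infinity>})"
    if "0 < s" for s
    using opt[OF that] by (intro bdd_aboveI2) auto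
  have EMeq: "EM_star M X s = mu (A s) - s * L (A s)" if "0 < s" for s
    unfolding EM_star_def mu_def[symmetric] L_def[symmetric]
    using opt[OF that] finA[OF that] by (intro cSup_eq_maximum) auto
  have EMge: "mu (A t) - s * L (A t) \<le> EM_star M X s" if "0 < s" "0 < t" for s t
    unfolding EM_star_def mu_def[symmetric] L_def[symmetric]
    using finA[OF that(2)] bdd[OF that(1)] by (intro cSUP_upper) auto
  define lam where "lam s = L (A s)" for s
  have anti: "lam s' \<le> lam s" if "0 < s" "s \<le> s'" for s s'
    unfolding lam_def using that finA[OF that(1)] by (intro L_mono) (auto simp: A_def)
  have null: "L {x\<in>S. f x = t} = 0" if "0 < t" for t
  proof -
    let ?B = "{x\<in>S. f x = t}"
    have "mu ?B \<le> mu {x. f x = t}"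
      unfolding mu_def by (intro P.finite_measure_mono) auto
    also have "mu {x. f x = t} = 0"
    proof -
      have "X -` {x. f x = t} \<inter> space M = {\<omega> \<in> space M. f (X \<omega>) = t}" by auto
      then show ?thesis using assms(7) that unfolding mu_def by simp
    qed
    finally have "mu ?B \<le> 0" .
    moreover have "t * L ?B \<le> mu ?B"
      using that finB[of ?B t] by (intro lowerR) auto
    ultimately show ?thesis using L_nn[of ?B] that
      by (smt (verit) mult_pos_pos)
  qed
  have A_mono: "A s' \<subseteq> A s" if "s \<le> s'" for s s'
    using that unfolding A_def by auto
  have right: "(\<lambda>n. lam (t + inverse (real (Suc n)))) \<longlonglongrightarrow> lam t" if t: "0 < t" for t
  proof -
    have "(\<lambda>n. L (A (t + inverse (real (Suc n))))) \<longlonglongrightarrow> L (\<Union>n. A (t + inverse (real (Suc n))))"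
      unfolding L_def
    proof (rule Lim_measure_incseq)
      show "range (\<lambda>n. A (t + inverse (real (Suc n)))) \<subseteq> sets lborel" by auto
      show "incseq (\<lambda>n. A (t + inverse (real (Suc n))))"
      proof (rule incseq_SucI)
        fix n
        have "inverse (real (Suc (Suc n))) \<le> inverse (real (Suc n))"
          by (simp add: le_imp_inverse_le)
        then have "\<And>y. t + inverse (real (Suc n)) \<le> y \<Longrightarrow> t + inverse (real (Suc (Suc n))) \<le> y"
          by linarith
        then show "A (t + inverse (real (Suc n))) \<subseteq> A (t + inverse (real (Suc (Suc n))))"
          unfolding A_def by blast
      qed
      have "(\<Union>n. A (t + inverse (real (Suc n)))) \<subseteq> A t"
        by (intro UN_least A_mono) simp
      then have "emeasure lborel (\<Union>n. A (t + inverse (real (Suc n)))) \<le> emeasure lborel (A t)"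
        by (rule emeasure_mono) simp
      then have "emeasure lborel (\<Union>n. A (t + inverse (real (Suc n)))) < \<infinity>"
        using finA[OF t] by (rule le_less_trans)
      then show "emeasure lborel (\<Union>n. A (t + inverse (real (Suc n)))) \<noteq> \<infinity>"
        by simp
    qed
    moreover have U: "(\<Union>n. A (t + inverse (real (Suc n)))) = {x\<in>S. t < f x}"
    proof safe
      fix x n assume xa: "x \<in> A (t + inverse (real (Suc n)))"
      have p: "0 < inverse (real (Suc n))" by simp
      have h: "x \<in> S \<and> t + inverse (real (Suc n)) \<le> f x" using xa unfolding A_def by blast
      then show "x \<in> S" by blast
      show "t < f x" using h p by linarith
    next
      fix x assume "x \<in> S" "t < f x"
      then obtain n where "inverse (real (Suc n)) < f x - t"
        using reals_Archimedean[of "f x - t"] by auto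
      then show "x \<in> (\<Union>n. A (t + inverse (real (Suc n))))"
        using \<open>x \<in> S\<close> unfolding A_def by (auto intro!: exI[of _ n])
    qed
    moreover have "L {x\<in>S. t < f x} = lam t"
    proof -
      have "A t = {x\<in>S. t < f x} \<union> {x\<in>S. f x = t}" unfolding A_def by auto
      moreover have "emeasure lborel {x\<in>S. t < f x} < \<infinity>" "emeasure lborel {x\<in>S. f x = t} < \<infinity>"
        using finB[of "{x\<in>S. t < f x}" t] finB[of "{x\<in>S. f x = t}" t] t
        by (auto simp: subset_eq less_imp_le)
      moreover have "L ({x\<in>S. t < f x} \<union> {x\<in>S. f x = t}) = L {x\<in>S. t < f x} + L {x\<in>S. f x = t}"
        using calculation(2,3) by (intro L_add) auto
      ultimately have "lam t = L {x\<in>S. t < f x} + L {x\<in>S. f x = t}"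
        unfolding lam_def by simp
      then show ?thesis using null[OF t] by simp
    qed
    ultimately show ?thesis unfolding lam_def by simp
  qed
  define th where "th t n = max (t/2) (t - inverse (real (Suc n)))" for t n
  have left: "(\<lambda>n. lam (th t n)) \<longlonglongrightarrow> lam t" if t: "0 < t" for t
  proof -
    have "(\<lambda>n. L (A (th t n))) \<longlonglongrightarrow> L (\<Inter>n. A (th t n))"
      unfolding L_def
    proof (rule Lim_measure_decseq)
      show "range (\<lambda>n. A (th t n)) \<subseteq> sets lborel" by auto
      show "decseq (\<lambda>n. A (th t n))"
      proof (rule decseq_SucI)
        fix n
        have "inverse (real (Suc (Suc n))) \<le> inverse (real (Suc n))"
          by (simp add: le_imp_inverse_le)
        note iv = this
        have "th t n \<le> th t (Suc n)" unfolding th_def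
          by (rule max.mono) (use iv in auto)
        then show "A (th t (Suc n)) \<subseteq> A (th t n)"
          unfolding A_def by (auto intro: order_trans)
      qed
      show "emeasure lborel (A (th t n)) \<noteq> \<infinity>" for n
      proof -
        have "0 < th t n" unfolding th_def using t by (simp add: less_max_iff_disj)
        then show ?thesis using finA[of "th t n"] by simp
      qed
    qed
    moreover have "(\<Inter>n. A (th t n)) = A t"
    proof safe
      fix x assume "x \<in> A t"
      moreover have "th t n \<le> t" for n
        unfolding th_def using t by (intro max.boundedI) (auto simp del: of_nat_Suc)
      ultimately show "x \<in> A (th t n)" for n using A_mono by blast
    next
      fix x assume x: "x \<in> (\<Inter>n. A (th t n))"
      then have "x \<in> S" unfolding A_def by auto
      have "t \<le> f x"
      proof (rule ccontr)
        assume "\<not> t \<le> f x"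
        then obtain n where n: "inverse (real (Suc n)) < t - f x"
          using reals_Archimedean[of "t - f x"] by auto
        have "th t n \<le> f x" using x unfolding A_def by auto
        moreover have "t - inverse (real (Suc n)) \<le> th t n" unfolding th_def by (rule max.cobounded2)
        ultimately show False using n by linarith
      qed
      then show "x \<in> A t" using \<open>x \<in> S\<close> unfolding A_def by auto
    qed
    ultimately show ?thesis unfolding lam_def by simp
  qed
  have deriv: "(EM_star M X has_real_derivative (- lam t)) (at t)" if t: "0 < t" for t
    unfolding has_field_derivative_iff LIM_eq
  proof (intro allI impI)
    fix r :: real assume r: "0 < r"
    obtain N1 where N1: "\<forall>n\<ge>N1. norm (lam (t + inverse (real (Suc n))) - lam t) < r"
      using LIMSEQ_D[OF right[OF t] r] by blast
    obtain N2 where N2: "\<forall>n\<ge>N2. norm (lam (th t n) - lam t) < r"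
      using LIMSEQ_D[OF left[OF t] r] by blast
    define d where "d = min (inverse (real (Suc N1))) (min (t/2) (inverse (real (Suc N2))))"
    have d: "0 < d" unfolding d_def using t by auto
    show "\<exists>d>0. \<forall>s. s \<noteq> t \<and> norm (s - t) < d \<longrightarrow>
        norm ((EM_star M X s - EM_star M X t) / (s - t) - - lam t) < r"
    proof (intro exI[of _ d] conjI allI impI d)
      fix s assume s: "s \<noteq> t \<and> norm (s - t) < d"
      have dd: "d \<le> inverse (real (Suc N1))" "d \<le> t/2" "d \<le> inverse (real (Suc N2))"
        unfolding d_def by (simp_all del: of_nat_Suc)
      have sd: "t - d < s" "s < t + d" using s by (auto simp: abs_less_iff)
      have s0: "0 < s" using sd dd by linarith
      define g where "g = EM_star M X"
      have gs: "g s = mu (A s) - s * lam s" and gt: "g t = mu (A t) - t * lam t"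
        using EMeq[OF s0] EMeq[OF t] unfolding g_def lam_def by auto
      have g1: "mu (A t) - s * lam t \<le> g s" using EMge[OF s0 t] unfolding g_def lam_def .
      have g2: "mu (A s) - t * lam s \<le> g t" using EMge[OF t s0] unfolding g_def lam_def .
      have a1: "g s - g t \<ge> - (s - t) * lam t" using g1 gt by (simp add: algebra_simps)
      have a2: "g s - g t \<le> - (s - t) * lam s" using g2 gs by (simp add: algebra_simps)
      show "norm ((EM_star M X s - EM_star M X t) / (s - t) - - lam t) < r"
      proof (cases "t < s")
        case True
        have "s \<le> t + inverse (real (Suc N1))" using sd dd by linarith
        then have l1: "lam (t + inverse (real (Suc N1))) \<le> lam s" using anti s0 by blast
        have l2: "lam s \<le> lam t" using anti t True by auto
        have l3: "lam t - r < lam (t + inverse (real (Suc N1)))" using N1 by auto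
        have q1: "- lam t \<le> (g s - g t) / (s - t)" using a1 True by (simp add: pos_le_divide_eq algebra_simps)
        have q2: "(g s - g t) / (s - t) \<le> - lam s" using a2 True by (simp add: pos_divide_le_eq algebra_simps)
        show ?thesis using q1 q2 l1 l2 l3 unfolding g_def by (auto simp: abs_less_iff)
      next
        case False
        then have st: "s < t" using s by auto
        have "th t N2 \<le> s" unfolding th_def using sd dd by (intro max.boundedI) linarith+
        then have l1: "lam s \<le> lam (th t N2)" using anti t unfolding th_def by auto
        have l2: "lam t \<le> lam s" using anti s0 st by auto
        have l3: "lam (th t N2) < lam t + r" using N2 by auto
        have q1: "(g s - g t) / (s - t) \<le> - lam t" using a1 st by (simp add: neg_divide_le_eq algebra_simps)
        have q2: "- lam s \<le> (g s - g t) / (s - t)" using a2 st by (simp add: neg_le_divide_eq algebra_simps)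
        show ?thesis using q1 q2 l1 l2 l3 unfolding g_def by (auto simp: abs_less_iff)
      qed
    qed
  qed
  have lv: "level_volume S f t = lam t" for t
    unfolding level_volume_def lam_def L_def A_def by simp
  show ?thesis
  proof
    show "\<forall>t>0. (EM_star M X has_real_derivative - level_volume S f t) (at t)"
      using deriv lv by simp
    show "convex_on {0<..} (EM_star M X)"
      by (rule convex_on_realI[where f'="\<lambda>t. - lam t"]) (auto intro: deriv anti)
  qed
qed

end
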